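(* Let $\{a_n\}_{n\ge1}$ be a sequence of positive real numbers. Suppose there are positive real numbers $r_1,r_2$ such that for all sufficiently large $n$ \[ \frac{a_{2n}}{a_n}<\frac{1}{2+r_1}\quad\text{and}\quad\frac{a_{2n+1}}{a_n}<\frac{1}{2+r_2}. \] Then $\sum_{n=1}^\infty a_n$ converges. *)

theory Defs
  imports Complex_Main
begin

end

theory Submission
  imports Defs
begin

lemma sum_double_ivl:
  fixes f :: "nat \<Rightarrow> real"
  assumes "m \<le> M"
  shows "sum f {2*m..<2*M} = (\<Sum>n=m..<M. f (2*n) + f (2*n+1))"
  using assms
proof (induction M)
  case 0 then show ?case by simp
next
  case (Suc M)
  show ?case
  proof (cases "m = Suc M")
    case True then show ?thesis by simp
  next
    case False
    then have mM: "m \<le> M" using Suc.prems by simp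
    have "sum f {2*m..<2*Suc M} = sum f {2*m..<2*M} + f (2*M) + f (2*M+1)"
      using mM by (simp add: sum.atLeastLessThan_Suc)
    also have "\<dots> = (\<Sum>n=m..<M. f (2*n) + f (2*n+1)) + (f (2*M) + f (2*M+1))"
      using Suc.IH[OF mM] by simp
    also have "\<dots> = (\<Sum>n=m..<Suc M. f (2*n) + f (2*n+1))"
      using mM by (simp add: sum.atLeastLessThan_Suc)
    finally show ?thesis .
  qed
qed

theorem corollary2p1p3:
  fixes a :: "nat \<Rightarrow> real" and r1 r2 :: real
  assumes pos: "\<And>n. n \<ge> 1 \<Longrightarrow> a n > 0"
    and r1: "r1 > 0" and r2: "r2 > 0"
    and ev: "\<forall>\<^sub>F n in sequentially.
               a (2 * n) / a n < 1 / (2 + r1) \<and> a (2 * n + 1) / a n < 1 / (2 + r2)"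
  shows "summable (\<lambda>n. a (Suc n))"
proof -
  define c where "c = max (1/(2+r1)) (1/(2+r2))"
  have c0: "c > 0" using r1 r2 unfolding c_def by (simp add: less_max_iff_disj)
  have "2 * (1/(2+r1)) < 1" using r1 by (simp add: field_simps)
  moreover have "2 * (1/(2+r2)) < 1" using r2 by (simp add: field_simps)
  ultimately have c1: "2*c < 1" unfolding c_def by (simp add: max_def)
  obtain N0 where N0: "\<And>n. n \<ge> N0 \<Longrightarrow>
      a (2 * n) / a n < 1 / (2 + r1) \<and> a (2 * n + 1) / a n < 1 / (2 + r2)"
    using ev unfolding eventually_sequentially by blast
  define N where "N = max N0 1"
  have N1: "N \<ge> 1" unfolding N_def by simp
  have step: "a (2*n) + a (2*n+1) \<le> 2*c * a n" if "n \<ge> N" for n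
  proof -
    have an: "a n > 0" using pos N1 that by simp
    have h: "a (2 * n) / a n < 1 / (2 + r1) \<and> a (2 * n + 1) / a n < 1 / (2 + r2)"
      using N0 that unfolding N_def by simp
    have "a (2*n) / a n \<le> c" using h unfolding c_def by linarith
    then have "a (2*n) \<le> c * a n" using an by (simp add: divide_le_eq)
    moreover have "a (2*n+1) / a n \<le> c" using h unfolding c_def by linarith
    then have "a (2*n+1) \<le> c * a n" using an by (simp add: divide_le_eq)
    ultimately show ?thesis by simp
  qed
  define B where "B k = sum a {2^k*N..<2^Suc k*N}" for k
  have Bstep: "B (Suc k) \<le> 2*c * B k" for k
  proof -
    have "B (Suc k) = sum a {2*(2^k*N)..<2*(2^Suc k*N)}"
      unfolding B_def by (simp add: mult.assoc)
    also have "\<dots> = (\<Sum>n=2^k*N..<2^Suc k*N. a (2*n) + a (2*n+1))"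
      by (rule sum_double_ivl) simp
    also have "\<dots> \<le> (\<Sum>n=2^k*N..<2^Suc k*N. 2*c * a n)"
    proof (rule sum_mono)
      fix n assume "n \<in> {2^k*N..<2^Suc k*N}"
      then have "n \<ge> N" by (metis atLeastLessThan_iff le_trans mult_le_mono1 one_le_power
            one_le_numeral mult_1 )
      then show "a (2*n) + a (2*n+1) \<le> 2*c * a n" by (rule step)
    qed
    also have "\<dots> = 2*c * B k" unfolding B_def by (simp add: sum_distrib_left)
    finally show ?thesis .
  qed
  have Bgeo: "B k \<le> (2*c)^k * B 0" for k
  proof (induction k)
    case 0 then show ?case by simp
  next
    case (Suc k)
    have "B (Suc k) \<le> 2*c * B k" by (rule Bstep)
    also have "\<dots> \<le> 2*c * ((2*c)^k * B 0)" using Suc.IH c0 by simp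
    finally show ?case by simp
  qed
  have B00: "B 0 \<ge> 0" unfolding B_def using pos N1
    by (intro sum_nonneg) (auto intro: less_imp_le)
  have blocks: "sum a {N..<2^k*N} = (\<Sum>j<k. B j)" for k
  proof (induction k)
    case 0 then show ?case by simp
  next
    case (Suc k)
    have "sum a {N..<2^Suc k*N} = sum a {N..<2^k*N} + sum a {2^k*N..<2^Suc k*N}"
      by (rule sum.atLeastLessThan_concat[symmetric]) auto
    then show ?case using Suc.IH unfolding B_def by simp
  qed
  have blockbound: "sum a {N..<2^k*N} \<le> B 0 / (1 - 2*c)" for k
  proof -
    have "sum a {N..<2^k*N} \<le> (\<Sum>j<k. (2*c)^j * B 0)"
      unfolding blocks by (intro sum_mono Bgeo)
    also have "\<dots> = B 0 * (\<Sum>j<k. (2*c)^j)" by (simp add: sum_distrib_left mult.commute)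
    also have "\<dots> \<le> B 0 * (1 / (1 - 2*c))"
    proof (rule mult_left_mono[OF _ B00])
      have "(\<Sum>j<k. (2*c)^j) = (1 - (2*c)^k) / (1 - 2*c)"
      proof -
        have ne: "2*c \<noteq> 1" using c1 by simp
        have "(\<Sum>j<k. (2*c)^j) = ((2*c)^k - 1) / (2*c - 1)" by (rule geometric_sum[OF ne])
        also have "\<dots> = (1 - (2*c)^k) / (1 - 2*c)"
          by (metis minus_diff_eq minus_divide_divide)
        finally show ?thesis .
      qed
      also have "\<dots> \<le> 1 / (1 - 2*c)" using c0 c1
        by (intro divide_right_mono) auto
      finally show "(\<Sum>j<k. (2*c)^j) \<le> 1 / (1 - 2*c)" .
    qed
    finally show ?thesis by simp
  qed
  define a' where "a' n = (if n \<ge> 1 then a n else 0)" for n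
  have a'nn: "0 \<le> a' n" for n unfolding a'_def using pos by (auto intro: less_imp_le)
  have "summable a'"
  proof (rule summableI_nonneg_bounded[OF a'nn])
    fix m
    have mle: "m \<le> 2^m*N" using N1
      by (metis less_exp less_imp_le_nat mult_le_mono mult_1_right)
    have "(\<Sum>i<m. a' i) \<le> (\<Sum>i<2^m*N. a' i)"
      by (rule sum_mono2) (use mle a'nn in auto)
    also have "\<dots> = (\<Sum>i<N. a' i) + sum a' {N..<2^m*N}"
      using N1 by (metis sum.atLeastLessThan_concat lessThan_atLeast0 le0 mle
        le_trans mult_le_mono1 one_le_power one_le_numeral mult_1)
    also have "sum a' {N..<2^m*N} = sum a {N..<2^m*N}"
      using N1 by (intro sum.cong) (auto simp: a'_def)
    finally show "(\<Sum>i<m. a' i) \<le> (\<Sum>i<N. a' i) + B 0 / (1 - 2*c)"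
      using blockbound[of m] by linarith
  qed
  then have "summable (\<lambda>n. a' (Suc n))" by (simp add: summable_Suc_iff)
  then show ?thesis by (simp add: a'_def)
qed

end
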